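(* Let $k$ be a positive integer, $a\ge k+2$ an integer and $G=K_a\,\square\,K_a$. Then $\gamma_{P,k}(G-v)=a-k-1$ for every vertex $v$ of $G$.
   Context: $K_a$ is the complete graph on $a$ vertices, $\square$ denotes the Cartesian product of graphs, and $G-v$ is obtained by deleting $v$ and its incident edges. $N_G[v]$ is the closed neighbourhood of $v$, and $N_G[S]$ the union of closed neighbourhoods of vertices of $S$. For $S\subseteq V(G)$, define $\mathcal{P}^{0}_{G,k}(S)=N_G[S]$ and $\mathcal{P}^{i+1}_{G,k}(S)=\bigcup\{N_G[v] : v\in \mathcal{P}^{i}_{G,k}(S),\ |N_G[v]\setminus \mathcal{P}^{i}_{G,k}(S)|\le k\}$; these increase and stabilize to $\mathcal{P}^{\infty}_{G,k}(S)$. $S$ is a $k$-power dominating set if $\mathcal{P}^{\infty}_{G,k}(S)=V(G)$; $\gamma_{P,k}(G)$ is the minimum size of such a set. *)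

theory Defs
  imports Main
begin

text \<open>A finite simple graph is given by a vertex set V and a symmetric irreflexive
adjacency relation E (only its restriction to V matters).\<close>

definition closed_nbhd :: "'a set \<Rightarrow> ('a \<Rightarrow> 'a \<Rightarrow> bool) \<Rightarrow> 'a \<Rightarrow> 'a set" where
  "closed_nbhd V E v = insert v {u \<in> V. E v u}"

definition closed_nbhd_set :: "'a set \<Rightarrow> ('a \<Rightarrow> 'a \<Rightarrow> bool) \<Rightarrow> 'a set \<Rightarrow> 'a set" where
  "closed_nbhd_set V E S = (\<Union>v\<in>S. closed_nbhd V E v)"

definition pd_step :: "'a set \<Rightarrow> ('a \<Rightarrow> 'a \<Rightarrow> bool) \<Rightarrow> nat \<Rightarrow> 'a set \<Rightarrow> 'a set" where
  "pd_step V E k P = P \<union> \<Union>{closed_nbhd V E v | v. v \<in> P \<and> card (closed_nbhd V E v - P) \<le> k}"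

definition pd_iter :: "'a set \<Rightarrow> ('a \<Rightarrow> 'a \<Rightarrow> bool) \<Rightarrow> nat \<Rightarrow> 'a set \<Rightarrow> nat \<Rightarrow> 'a set" where
  "pd_iter V E k S i = (pd_step V E k ^^ i) (closed_nbhd_set V E S)"

definition pd_closure :: "'a set \<Rightarrow> ('a \<Rightarrow> 'a \<Rightarrow> bool) \<Rightarrow> nat \<Rightarrow> 'a set \<Rightarrow> 'a set" where
  "pd_closure V E k S = (\<Union>i. pd_iter V E k S i)"

definition k_power_dominating :: "'a set \<Rightarrow> ('a \<Rightarrow> 'a \<Rightarrow> bool) \<Rightarrow> nat \<Rightarrow> 'a set \<Rightarrow> bool" where
  "k_power_dominating V E k S \<longleftrightarrow> S \<subseteq> V \<and> pd_closure V E k S = V"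

definition k_power_domination_number :: "'a set \<Rightarrow> ('a \<Rightarrow> 'a \<Rightarrow> bool) \<Rightarrow> nat \<Rightarrow> nat" where
  "k_power_domination_number V E k = Min {card S | S. k_power_dominating V E k S}"

definition rook_vertices :: "nat \<Rightarrow> (nat \<times> nat) set" where
  "rook_vertices a = {0..<a} \<times> {0..<a}"

definition rook_adj :: "(nat \<times> nat) \<Rightarrow> (nat \<times> nat) \<Rightarrow> bool" where
  "rook_adj x y \<longleftrightarrow> (fst x = fst y \<and> snd x \<noteq> snd y) \<or> (snd x = snd y \<and> fst x \<noteq> fst y)"

end

theory Submission
  imports Defs
begin

lemma pd_iter_0: "pd_iter V E k S 0 = closed_nbhd_set V E S"
  by (simp add: pd_iter_def)

lemma pd_iter_Suc: "pd_iter V E k S (Suc i) = pd_step V E k (pd_iter V E k S i)"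
  by (simp add: pd_iter_def)

lemma pd_step_incl: "P \<subseteq> pd_step V E k P"
  unfolding pd_step_def by blast

lemma pd_step_fire: "x \<in> P \<Longrightarrow> card (closed_nbhd V E x - P) \<le> k \<Longrightarrow> closed_nbhd V E x \<subseteq> pd_step V E k P"
  unfolding pd_step_def by blast

lemma pd_iter_closure: "pd_iter V E k S i \<subseteq> pd_closure V E k S"
  unfolding pd_closure_def by blast

lemma pd_fix:
  assumes "pd_step V E k (closed_nbhd_set V E S) = closed_nbhd_set V E S"
  shows "pd_closure V E k S = closed_nbhd_set V E S"
proof -
  have "pd_iter V E k S i = closed_nbhd_set V E S" for i
    by (induction i) (simp_all add: pd_iter_0 pd_iter_Suc assms)
  then show ?thesis unfolding pd_closure_def by simp
qed

lemma nbhd_sub: "x \<in> V \<Longrightarrow> closed_nbhd V E x \<subseteq> V"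
  unfolding closed_nbhd_def by auto

lemma pd_iter_sub: "S \<subseteq> V \<Longrightarrow> pd_iter V E k S i \<subseteq> V"
proof (induction i)
  case 0
  show ?case unfolding pd_iter_0 closed_nbhd_set_def
  proof (rule UN_least)
    fix x assume "x \<in> S" thus "closed_nbhd V E x \<subseteq> V" using 0 by (intro nbhd_sub) auto
  qed
next
  case (Suc i)
  show ?case unfolding pd_iter_Suc pd_step_def
  proof (intro Un_least Sup_least)
    show "pd_iter V E k S i \<subseteq> V" by (rule Suc.IH[OF Suc.prems])
    fix X assume "X \<in> {closed_nbhd V E v |v. v \<in> pd_iter V E k S i \<and> card (closed_nbhd V E v - pd_iter V E k S i) \<le> k}"
    then obtain w where w: "X = closed_nbhd V E w" "w \<in> pd_iter V E k S i" by auto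
    have "w \<in> V" using w(2) Suc.IH[OF Suc.prems] by auto
    thus "X \<subseteq> V" unfolding w(1) by (rule nbhd_sub)
  qed
qed

lemma pd_closure_sub: "S \<subseteq> V \<Longrightarrow> pd_closure V E k S \<subseteq> V"
  unfolding pd_closure_def by (rule UN_least, erule pd_iter_sub)

lemma nb: "x \<in> rook_vertices a - {v} \<Longrightarrow> closed_nbhd (rook_vertices a - {v}) rook_adj x
   = {u \<in> rook_vertices a - {v}. fst u = fst x \<or> snd u = snd x}"
  unfolding closed_nbhd_def rook_adj_def by (auto simp: prod_eq_iff)

lemma nbs: assumes "S \<subseteq> rook_vertices a - {v}" shows "closed_nbhd_set (rook_vertices a - {v}) rook_adj S
   = {u \<in> rook_vertices a - {v}. fst u \<in> fst ` S \<or> snd u \<in> snd ` S}"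
proof -
  have "closed_nbhd_set (rook_vertices a - {v}) rook_adj S = (\<Union>x\<in>S. {u \<in> rook_vertices a - {v}. fst u = fst x \<or> snd u = snd x})"
    unfolding closed_nbhd_set_def using assms by (intro SUP_cong refl nb) auto
  also have "\<dots> = {u \<in> rook_vertices a - {v}. fst u \<in> fst ` S \<or> snd u \<in> snd ` S}" by force
  finally show ?thesis .
qed

lemma finV: "finite (rook_vertices a - {v})"
  unfolding rook_vertices_def by simp

lemma rv: "x \<in> rook_vertices a \<longleftrightarrow> fst x < a \<and> snd x < a"
  unfolding rook_vertices_def by (cases x) auto

lemma lower:
  assumes kpd: "k_power_dominating (rook_vertices a - {v}) rook_adj k S"
    and ak: "a \<ge> k + 2" and v: "v \<in> rook_vertices a"
  shows "card S \<ge> a - k - 1"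
proof (rule ccontr)
  define V where "V = rook_vertices a - {v}"
  assume "\<not> ?thesis"
  hence s: "card S + k + 2 \<le> a" by simp
  have SV: "S \<subseteq> V" and cl: "pd_closure V rook_adj k S = V"
    using kpd unfolding k_power_dominating_def V_def by auto
  have finS: "finite S" using finite_subset[OF SV] finV V_def by blast
  define R where "R = fst ` S"
  define C where "C = snd ` S"
  have cR: "card R \<le> card S" unfolding R_def by (rule card_image_le[OF finS])
  have cC: "card C \<le> card S" unfolding C_def by (rule card_image_le[OF finS])
  have fR: "finite R" "finite C" using finS R_def C_def by auto
  define P where "P = closed_nbhd_set V rook_adj S"
  have P: "P = {u \<in> V. fst u \<in> R \<or> snd u \<in> C}"
    using nbs[of S a v] SV unfolding P_def V_def R_def C_def by simp
  have big: "card ({0..<a} - (X \<union> {y})) \<ge> k + 1" if "finite X" "card X \<le> card S" for X :: "nat set" and y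
  proof -
    have "card {0..<a} - card (X \<union> {y}) \<le> card ({0..<a} - (X \<union> {y}))"
      by (rule diff_card_le_card_Diff) (use that in simp)
    moreover have "card (X \<union> {y}) \<le> card X + 1"
      using card_Un_le[of X "{y}"] by simp
    ultimately show ?thesis using that s by simp
  qed
  have bigR: "card ({0..<a} - (R \<union> {fst v})) \<ge> k + 1" using big fR cR by blast
  have bigC: "card ({0..<a} - (C \<union> {snd v})) \<ge> k + 1" using big fR cC by blast
  have finN: "finite (closed_nbhd V rook_adj x - P)" if "x \<in> V" for x
    using finite_subset[OF nbhd_sub[OF that]] finV V_def by blast
  have fire: "closed_nbhd V rook_adj x \<subseteq> P"
    if xP: "x \<in> P" and ck: "card (closed_nbhd V rook_adj x - P) \<le> k" for x
  proof -
    have xV: "x \<in> V" using xP P by auto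
    have N: "closed_nbhd V rook_adj x = {u \<in> V. fst u = fst x \<or> snd u = snd x}"
      using nb[of x a v] xV V_def by simp
    have xa: "fst x < a" "snd x < a" using xV V_def rv by auto
    consider "fst x \<in> R" "snd x \<in> C" | "fst x \<in> R" "snd x \<notin> C" | "fst x \<notin> R" "snd x \<in> C"
      using xP P by auto
    then show ?thesis
    proof cases
      case 1 then show ?thesis using N P by auto
    next
      case 2
      define W where "W = (\<lambda>i. (i, snd x)) ` ({0..<a} - (R \<union> {fst v}))"
      have "W \<subseteq> closed_nbhd V rook_adj x - P"
        unfolding W_def N unfolding P V_def using 2 xa by (auto simp: rv)
      hence "card W \<le> card (closed_nbhd V rook_adj x - P)"
        by (rule card_mono[OF finN[OF xV]])
      moreover have "card W = card ({0..<a} - (R \<union> {fst v}))"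
        unfolding W_def by (rule card_image) (auto simp: inj_on_def)
      ultimately show ?thesis using bigR ck by simp
    next
      case 3
      define W where "W = (\<lambda>i. (fst x, i)) ` ({0..<a} - (C \<union> {snd v}))"
      have "W \<subseteq> closed_nbhd V rook_adj x - P"
        unfolding W_def N unfolding P V_def using 3 xa by (auto simp: rv)
      hence "card W \<le> card (closed_nbhd V rook_adj x - P)"
        by (rule card_mono[OF finN[OF xV]])
      moreover have "card W = card ({0..<a} - (C \<union> {snd v}))"
        unfolding W_def by (rule card_image) (auto simp: inj_on_def)
      ultimately show ?thesis using bigC ck by simp
    qed
  qed
  have "pd_step V rook_adj k P = P"
    using fire pd_step_incl[of P V rook_adj k] unfolding pd_step_def by blast
  hence "pd_closure V rook_adj k S = P" using pd_fix P_def by metis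
  hence PV: "P = V" using cl by simp
  have "{0..<a} - (R \<union> {fst v}) \<noteq> {}" using bigR by (metis card.empty not_one_le_zero le_add2 le_trans)
  then obtain i where i: "i \<in> {0..<a} - (R \<union> {fst v})" by blast
  have "{0..<a} - (C \<union> {snd v}) \<noteq> {}" using bigC by (metis card.empty not_one_le_zero le_add2 le_trans)
  then obtain j where j: "j \<in> {0..<a} - (C \<union> {snd v})" by blast
  have "(i, j) \<in> V" using i j unfolding V_def by (auto simp: rv)
  moreover have "(i, j) \<notin> P" using i j P by auto
  ultimately show False using PV by simp
qed

lemma fire_via:
  assumes "x \<in> T" "T \<subseteq> P" "closed_nbhd V E x - T \<subseteq> W" "finite W" "card W \<le> k"
  shows "closed_nbhd V E x \<subseteq> pd_step V E k P"
proof (rule pd_step_fire)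
  show "x \<in> P" using assms by blast
  have "closed_nbhd V E x - P \<subseteq> W" using assms by blast
  hence "card (closed_nbhd V E x - P) \<le> card W" by (rule card_mono[OF assms(4)])
  thus "card (closed_nbhd V E x - P) \<le> k" using assms by simp
qed

lemma upper:
  assumes k: "k \<ge> 1" and ak: "a \<ge> k + 2" and v: "v \<in> rook_vertices a"
  shows "\<exists>S. k_power_dominating (rook_vertices a - {v}) rook_adj k S \<and> card S = a - k - 1"
proof -
  define V where "V = rook_vertices a - {v}"
  obtain r c where vrc: "v = (r, c)" by (cases v)
  have ra: "r < a" "c < a" using v vrc rv by auto
  have "card ({0..<a} - {r, c}) \<ge> a - 2"
  proof -
    have "card {r, c} \<le> 2" by (cases "r = c") auto
    thus ?thesis using diff_card_le_card_Diff[of "{r,c}" "{0..<a}"] by simp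
  qed
  hence "a - k - 1 \<le> card ({0..<a} - {r, c})" using k ak by simp
  then obtain D where D: "D \<subseteq> {0..<a} - {r, c}" "card D = a - k - 1" "finite D"
    by (rule obtain_subset_with_card_n)
  define S where "S = (\<lambda>t. (t, t)) ` D"
  have SV: "S \<subseteq> V" unfolding S_def V_def vrc using D(1) by (auto simp: rv)
  have cS: "card S = a - k - 1" unfolding S_def using D by (subst card_image) (auto simp: inj_on_def)
  have fS: "fst ` S = D" "snd ` S = D" unfolding S_def by force+
  define U where "U = {0..<a} - D"
  have cU: "card U = k + 1" unfolding U_def using D ak by (subst card_Diff_subset) auto
  have rU: "r \<in> U" "c \<in> U" using D ra unfolding U_def by auto
  have cUr: "card (U - {r}) = k" "card (U - {c}) = k" using cU rU by simp_all
  have fU: "finite (U - {r})" "finite (U - {c})" unfolding U_def by auto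
  have "D \<noteq> {}" using D ak by auto
  then obtain d where d: "d \<in> D" by blast
  have dr: "d \<noteq> r" "d \<noteq> c" "d < a" using d D by auto
  have Nx: "closed_nbhd V rook_adj x = {u \<in> V. fst u = fst x \<or> snd u = snd x}" if "x \<in> V" for x
    using nb[of x a v] that V_def by simp
  define P where "P = pd_iter V rook_adj k S"
  have P0: "P 0 = {u \<in> V. fst u \<in> D \<or> snd u \<in> D}"
    unfolding P_def pd_iter_0 using nbs[of S a v] SV fS V_def by simp
  have PS: "P (Suc i) = pd_step V rook_adj k (P i)" for i unfolding P_def pd_iter_Suc ..
  have Pinc: "P i \<subseteq> P (Suc i)" for i unfolding P_def pd_iter_Suc by (rule pd_step_incl)
  define T1 where "T1 = {u \<in> V. fst u \<in> D \<or> snd u \<in> D \<or> snd u = c}"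
  have x1V: "(d, c) \<in> V" unfolding V_def vrc using dr ra by (auto simp: rv)
  have "closed_nbhd V rook_adj (d, c) \<subseteq> P (Suc 0)"
    unfolding PS
  proof (rule fire_via[where W = "(\<lambda>i. (i, c)) ` (U - {r})"])
    show "(d, c) \<in> P 0" using P0 x1V d by simp
    show "P 0 \<subseteq> P 0" by simp
    show "closed_nbhd V rook_adj (d, c) - P 0 \<subseteq> (\<lambda>i. (i, c)) ` (U - {r})"
      unfolding Nx[OF x1V] unfolding P0 V_def U_def vrc using d by (auto simp: rv)
    show "finite ((\<lambda>i. (i, c)) ` (U - {r}))" using fU by simp
    show "card ((\<lambda>i. (i, c)) ` (U - {r})) \<le> k" using card_image_le[OF fU(1)] cUr by simp
  qed
  hence T1P: "T1 \<subseteq> P (Suc 0)"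
    using P0 Pinc[of 0] Nx[OF x1V] unfolding T1_def by auto
  define T2 where "T2 = {u \<in> V. fst u \<noteq> r \<or> snd u \<in> D \<or> snd u = c}"
  have row: "closed_nbhd V rook_adj (i, c) \<subseteq> P (Suc (Suc 0))" if "i < a" "i \<noteq> r" for i
  proof -
    have xV: "(i, c) \<in> V" unfolding V_def vrc using that ra by (auto simp: rv)
    show ?thesis unfolding PS[of "Suc 0"]
    proof (rule fire_via[where W = "(\<lambda>j. (i, j)) ` (U - {c})" and T = T1])
      show "(i, c) \<in> T1" using xV unfolding T1_def by simp
      show "T1 \<subseteq> P (Suc 0)" using T1P .
      show "closed_nbhd V rook_adj (i, c) - T1 \<subseteq> (\<lambda>j. (i, j)) ` (U - {c})"
        unfolding Nx[OF xV] unfolding T1_def V_def U_def vrc by (auto simp: rv)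
      show "finite ((\<lambda>j. (i, j)) ` (U - {c}))" using fU by simp
      show "card ((\<lambda>j. (i, j)) ` (U - {c})) \<le> k" using card_image_le[OF fU(2)] cUr by simp
    qed
  qed
  have T2P: "T2 \<subseteq> P (Suc (Suc 0))"
  proof
    fix u assume u: "u \<in> T2"
    show "u \<in> P (Suc (Suc 0))"
    proof (cases "fst u = r")
      case False
      have "u \<in> V" using u T2_def by simp
      hence "u \<in> closed_nbhd V rook_adj (fst u, c)" using False ra
        by (subst Nx) (auto simp: V_def vrc rv)
      thus ?thesis using row[of "fst u"] False \<open>u \<in> V\<close> by (auto simp: V_def rv)
    next
      case True
      hence "u \<in> T1" using u unfolding T1_def T2_def by auto
      thus ?thesis using T1P Pinc[of "Suc 0"] by auto
    qed
  qed
  have VP: "V \<subseteq> P (Suc (Suc (Suc 0)))"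
  proof
    fix u assume uV: "u \<in> V"
    show "u \<in> P (Suc (Suc (Suc 0)))"
    proof (cases "fst u = r")
      case False
      hence "u \<in> T2" using uV T2_def by simp
      thus ?thesis using T2P Pinc[of "Suc (Suc 0)"] by auto
    next
      case True
      obtain j where u: "u = (r, j)" using True by (cases u) auto
      have ja: "j < a" "j \<noteq> c" using uV u unfolding V_def vrc by (auto simp: rv)
      have xV: "(d, j) \<in> V" unfolding V_def vrc using dr ja by (auto simp: rv)
      have "closed_nbhd V rook_adj (d, j) \<subseteq> P (Suc (Suc (Suc 0)))"
        unfolding PS[of "Suc (Suc 0)"]
      proof (rule fire_via[where W = "{(r, j)}" and T = T2])
        show "(d, j) \<in> T2" using xV dr unfolding T2_def by simp
        show "T2 \<subseteq> P (Suc (Suc 0))" using T2P .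
        show "closed_nbhd V rook_adj (d, j) - T2 \<subseteq> {(r, j)}"
          unfolding Nx[OF xV] unfolding T2_def using dr by auto
        show "finite {(r, j)}" by simp
        show "card {(r, j)} \<le> k" using k by simp
      qed
      moreover have "u \<in> closed_nbhd V rook_adj (d, j)" using uV u by (subst Nx[OF xV]) simp
      ultimately show ?thesis by blast
    qed
  qed
  have "pd_closure V rook_adj k S = V"
    using VP pd_iter_closure[of V rook_adj k S "Suc (Suc (Suc 0))"] pd_closure_sub[OF SV] unfolding P_def by blast
  thus ?thesis using SV cS unfolding k_power_dominating_def V_def by blast
qed

theorem mainTheorem6:
  fixes k a :: nat and v :: "nat \<times> nat"
  assumes "k \<ge> 1" and "a \<ge> k + 2" and "v \<in> rook_vertices a"
  shows "k_power_domination_number (rook_vertices a - {v}) rook_adj k = a - k - 1"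
proof -
  let ?A = "{card S | S. k_power_dominating (rook_vertices a - {v}) rook_adj k S}"
  have "?A \<subseteq> {..card (rook_vertices a - {v})}"
    unfolding k_power_dominating_def by (auto intro!: card_mono[OF finV[of a v]])
  hence fin: "finite ?A" by (rule finite_subset) simp
  show ?thesis unfolding k_power_domination_number_def
  proof (rule Min_eqI[OF fin])
    show "y \<in> ?A \<Longrightarrow> a - k - 1 \<le> y" for y using lower assms by blast
    obtain S where "k_power_dominating (rook_vertices a - {v}) rook_adj k S" "card S = a - k - 1"
      using upper[OF assms] by blast
    then show "a - k - 1 \<in> ?A" by (auto intro!: exI[of _ S])
  qed
qed

end
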